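(* The set $\{\gamma(w): w \text{ a nanoword over }\alpha\}$ is equal to the commutator subgroup $[\Pi,\Pi]$ of $\Pi$.
   Context: Fix a set $\alpha$ with an involution $\tau$. A nanoword over $\alpha$ is a pair $(\mathcal A,w)$ with $\mathcal A$ a finite set with a map $A\mapsto|A|\in\alpha$ and $w:\{1,\dots,n\}\to\mathcal A$ a word in which each letter of $\mathcal A$ occurs exactly twice. Let $\Pi$ be the group with generators $\{z_a\}_{a\in\alpha}$ and defining relations $z_az_{\tau(a)}=1$ for $a\in\alpha$. For a nanoword $(\mathcal A,w)$ of length $n$ and $i=1,\dots,n$ set $\gamma_i=z_{|w(i)|}$ if position $i$ is the first occurrence of the letter $w(i)$ in $w$, and $\gamma_i=z_{\tau(|w(i)|)}=z_{|w(i)|}^{-1}$ otherwise; put $\gamma(w)=\gamma_1\cdots\gamma_n\in\Pi$ (with $\gamma$ of the empty nanoword equal to $1$). *)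

theory Defs
  imports "HOL-Algebra.Generated_Groups"
begin

text \<open>The group Pi with generators z_a (a in alpha) and relations z_a z_(tau a) = 1,
  presented as words over alpha modulo the congruence generated by cancelling
  an adjacent pair  a (tau a).  (Since tau is an involution, this monoid
  presentation defines the same group as the group presentation.)\<close>

definition pi_red :: "('a \<Rightarrow> 'a) \<Rightarrow> ('a list \<times> 'a list) set" where
  "pi_red tau = {(u @ [a, tau a] @ v, u @ v) | u a v. True}"

definition pi_eqv :: "('a \<Rightarrow> 'a) \<Rightarrow> ('a list \<times> 'a list) set" where
  "pi_eqv tau = (pi_red tau \<union> (pi_red tau)\<inverse>)\<^sup>*"

definition Pi_grp :: "('a \<Rightarrow> 'a) \<Rightarrow> 'a list set monoid" where
  "Pi_grp tau =
     \<lparr> carrier = UNIV // pi_eqv tau,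
       mult = (\<lambda>X Y. \<Union>x\<in>X. \<Union>y\<in>Y. pi_eqv tau `` {x @ y}),
       one = pi_eqv tau `` {[]} \<rparr>"

text \<open>A nanoword: letters are natural numbers, lab assigns to each letter its
  projection |A| in alpha, and every letter occurring in w occurs exactly twice.\<close>

definition is_nanoword :: "nat list \<Rightarrow> bool" where
  "is_nanoword w \<longleftrightarrow> (\<forall>x\<in>set w. count_list w x = 2)"

definition gamma_seq :: "('a \<Rightarrow> 'a) \<Rightarrow> (nat \<Rightarrow> 'a) \<Rightarrow> nat list \<Rightarrow> 'a list" where
  "gamma_seq tau lab w =
     map (\<lambda>i. if w ! i \<in> set (take i w) then tau (lab (w ! i)) else lab (w ! i))
         [0..<length w]"

definition gamma :: "('a \<Rightarrow> 'a) \<Rightarrow> (nat \<Rightarrow> 'a) \<Rightarrow> nat list \<Rightarrow> 'a list set" where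
  "gamma tau lab w = pi_eqv tau `` {gamma_seq tau lab w}"

end

theory Submission
  imports Defs
begin

definition cls :: "('a \<Rightarrow> 'a) \<Rightarrow> 'a list \<Rightarrow> 'a list set" where
  "cls tau s = pi_eqv tau `` {s}"

definition bar :: "('a \<Rightarrow> 'a) \<Rightarrow> 'a list \<Rightarrow> 'a list" where
  "bar tau s = rev (map tau s)"

lemma equiv_pi: "equiv UNIV (pi_eqv tau)"
  unfolding pi_eqv_def
proof (rule equivI)
  show "sym ((pi_red tau \<union> (pi_red tau)\<inverse>)\<^sup>*)"
    unfolding sym_def
    by (metis converse_Un converse_converse rtrancl_converseI sup_commute)
qed (auto simp: refl_on_def trans_def intro: rtrancl_trans)

lemma pi_red_ctx: "(s, t) \<in> pi_red tau \<Longrightarrow> (p @ s @ q, p @ t @ q) \<in> pi_red tau"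
  unfolding pi_red_def by auto (metis append.assoc append_Cons)

lemma pi_eqv_ctx:
  assumes "(s, t) \<in> pi_eqv tau" shows "(p @ s @ q, p @ t @ q) \<in> pi_eqv tau"
  using assms unfolding pi_eqv_def
proof (induction rule: rtrancl_induct)
  case base then show ?case by simp
next
  case (step y z)
  then have "(p @ y @ q, p @ z @ q) \<in> pi_red tau \<union> (pi_red tau)\<inverse>"
    using pi_red_ctx by blast
  with step show ?case by (meson rtrancl.rtrancl_into_rtrancl)
qed

lemma pi_eqv_sym: "(s, t) \<in> pi_eqv tau \<Longrightarrow> (t, s) \<in> pi_eqv tau"
  using equiv_pi[of tau] unfolding equiv_def sym_def by blast

lemma pi_eqv_trans: "(s, t) \<in> pi_eqv tau \<Longrightarrow> (t, u) \<in> pi_eqv tau \<Longrightarrow> (s, u) \<in> pi_eqv tau"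
  using equiv_pi[of tau] unfolding equiv_def trans_def by blast

lemma pi_eqv_refl[simp]: "(s, s) \<in> pi_eqv tau"
  unfolding pi_eqv_def by simp

lemma pi_eqv_app:
  assumes "(s, s') \<in> pi_eqv tau" "(t, t') \<in> pi_eqv tau"
  shows "(s @ t, s' @ t') \<in> pi_eqv tau"
proof -
  have "(s @ t, s' @ t) \<in> pi_eqv tau" using pi_eqv_ctx[OF assms(1), of "[]" t] by simp
  moreover have "(s' @ t, s' @ t') \<in> pi_eqv tau" using pi_eqv_ctx[OF assms(2), of s' "[]"] by simp
  ultimately show ?thesis by (rule pi_eqv_trans)
qed

lemma cls_eq_iff: "cls tau s = cls tau t \<longleftrightarrow> (s, t) \<in> pi_eqv tau"
  unfolding cls_def using eq_equiv_class_iff[OF equiv_pi] by blast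

lemma in_cls: "x \<in> cls tau s \<longleftrightarrow> (s, x) \<in> pi_eqv tau"
  unfolding cls_def by simp

lemma mult_cls: "mult (Pi_grp tau) (cls tau s) (cls tau t) = cls tau (s @ t)"
proof -
  have "pi_eqv tau `` {x @ y} = cls tau (s @ t)" if "x \<in> cls tau s" "y \<in> cls tau t" for x y
    using that pi_eqv_app[of x s tau y t] pi_eqv_sym
    by (metis cls_def cls_eq_iff in_cls)
  moreover have "s \<in> cls tau s" "t \<in> cls tau t" by (auto simp: in_cls)
  ultimately show ?thesis unfolding Pi_grp_def by (auto simp del: Image_singleton_iff)
qed

lemma one_cls: "one (Pi_grp tau) = cls tau []"
  unfolding Pi_grp_def cls_def by simp

lemma carrier_Pi: "carrier (Pi_grp tau) = range (cls tau)"
  unfolding Pi_grp_def cls_def quotient_def by auto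

lemma red_pair: "(p @ [a, tau a] @ q, p @ q) \<in> pi_eqv tau"
  unfolding pi_eqv_def pi_red_def by blast

lemma bar_cancel:
  assumes inv: "\<forall>a. tau (tau a) = a"
  shows "(bar tau s @ s, []) \<in> pi_eqv tau"
proof (induction s)
  case Nil then show ?case by (simp add: bar_def)
next
  case (Cons a s)
  have "(bar tau s @ [tau a, tau (tau a)] @ s, bar tau s @ s) \<in> pi_eqv tau" by (rule red_pair)
  then have "(bar tau (a # s) @ a # s, bar tau s @ s) \<in> pi_eqv tau"
    using inv by (simp add: bar_def)
  then show ?case using Cons pi_eqv_trans by blast
qed

lemma bar_bar: "\<forall>a. tau (tau a) = a \<Longrightarrow> bar tau (bar tau s) = s"
  unfolding bar_def by (simp add: rev_map map_idI)

lemma bar_cancel2: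
  assumes inv: "\<forall>a. tau (tau a) = a"
  shows "(s @ bar tau s, []) \<in> pi_eqv tau"
  using bar_cancel[OF inv, of "bar tau s"] bar_bar[OF inv] by simp

lemma group_Pi:
  assumes inv: "\<forall>a. tau (tau a) = a"
  shows "group (Pi_grp tau)"
proof (rule groupI)
  fix x y assume "x \<in> carrier (Pi_grp tau)" "y \<in> carrier (Pi_grp tau)"
  then show "x \<otimes>\<^bsub>Pi_grp tau\<^esub> y \<in> carrier (Pi_grp tau)"
    by (auto simp: carrier_Pi mult_cls)
next
  show "\<one>\<^bsub>Pi_grp tau\<^esub> \<in> carrier (Pi_grp tau)" by (simp add: carrier_Pi one_cls)
next
  fix x y z assume "x \<in> carrier (Pi_grp tau)" "y \<in> carrier (Pi_grp tau)" "z \<in> carrier (Pi_grp tau)"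
  then show "x \<otimes>\<^bsub>Pi_grp tau\<^esub> y \<otimes>\<^bsub>Pi_grp tau\<^esub> z = x \<otimes>\<^bsub>Pi_grp tau\<^esub> (y \<otimes>\<^bsub>Pi_grp tau\<^esub> z)"
    by (auto simp: carrier_Pi mult_cls)
next
  fix x assume "x \<in> carrier (Pi_grp tau)"
  then show "\<one>\<^bsub>Pi_grp tau\<^esub> \<otimes>\<^bsub>Pi_grp tau\<^esub> x = x"
    by (auto simp: carrier_Pi mult_cls one_cls)
next
  fix x assume "x \<in> carrier (Pi_grp tau)"
  then obtain s where s: "x = cls tau s" by (auto simp: carrier_Pi)
  show "\<exists>y\<in>carrier (Pi_grp tau). y \<otimes>\<^bsub>Pi_grp tau\<^esub> x = \<one>\<^bsub>Pi_grp tau\<^esub>"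
    by (rule bexI[of _ "cls tau (bar tau s)"])
       (auto simp: s mult_cls one_cls cls_eq_iff bar_cancel[OF inv] carrier_Pi)
qed

lemma inv_cls:
  assumes inv: "\<forall>a. tau (tau a) = a"
  shows "inv\<^bsub>Pi_grp tau\<^esub> (cls tau s) = cls tau (bar tau s)"
proof -
  interpret group "Pi_grp tau" by (rule group_Pi[OF inv])
  show ?thesis
    by (rule inv_equality) (auto simp: mult_cls one_cls cls_eq_iff bar_cancel[OF inv] carrier_Pi)
qed


fun gs :: "('a \<Rightarrow> 'a) \<Rightarrow> (nat \<Rightarrow> 'a) \<Rightarrow> nat set \<Rightarrow> nat list \<Rightarrow> 'a list" where
  "gs tau lab S [] = []"
| "gs tau lab S (x # xs) = (if x \<in> S then tau (lab x) else lab x) # gs tau lab (insert x S) xs"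

lemma gs_map: "gs tau lab S w =
   map (\<lambda>i. if w ! i \<in> S \<union> set (take i w) then tau (lab (w ! i)) else lab (w ! i)) [0..<length w]"
proof (induction w arbitrary: S)
  case Nil then show ?case by simp
next
  case (Cons x xs)
  show ?case
    by (simp add: Cons upt_conv_Cons map_Suc_upt[symmetric] del: upt_Suc)
qed

lemma gamma_seq_gs: "gamma_seq tau lab w = gs tau lab {} w"
  unfolding gamma_seq_def gs_map by simp

lemma gs_append: "gs tau lab S (xs @ ys) = gs tau lab S xs @ gs tau lab (S \<union> set xs) ys"
  by (induction xs arbitrary: S) auto

lemma length_gs[simp]: "length (gs tau lab S xs) = length xs"
  by (induction xs arbitrary: S) auto

lemma gs_cong: "S \<inter> set xs = S' \<inter> set xs \<Longrightarrow> gs tau lab S xs = gs tau lab S' xs"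
proof (induction xs arbitrary: S S')
  case Nil then show ?case by simp
next
  case (Cons x xs)
  have "x \<in> S \<longleftrightarrow> x \<in> S'" using Cons.prems by auto
  moreover have "insert x S \<inter> set xs = insert x S' \<inter> set xs" using Cons.prems by auto
  moreover have "gs tau lab (insert x S) xs = gs tau lab (insert x S') xs"
    by (rule Cons.IH) (rule calculation(2))
  ultimately show ?case by simp
qed

lemma gs_drop: "x \<notin> set xs \<Longrightarrow> gs tau lab (insert x S) xs = gs tau lab S xs"
  by (rule gs_cong) auto

lemma gs_lab: "x \<notin> set xs \<Longrightarrow> gs tau (lab(x := a)) S xs = gs tau lab S xs"
  by (induction xs arbitrary: S) auto

definition realizable :: "('a \<Rightarrow> 'a) \<Rightarrow> 'a list \<Rightarrow> bool" where
  "realizable tau s \<longleftrightarrow> (\<exists>lab w. is_nanoword w \<and> s = gs tau lab {} w)"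

lemma nanoword_decomp:
  assumes "is_nanoword w" "w \<noteq> []"
  shows "\<exists>x q r. w = x # q @ x # r \<and> x \<notin> set q \<and> x \<notin> set r \<and> is_nanoword (q @ r)"
proof -
  obtain x t where w: "w = x # t" using assms(2) by (cases w) auto
  have c: "count_list w x = 2" using assms(1) w unfolding is_nanoword_def by auto
  then have "count_list t x = 1" using w by simp
  then have "x \<in> set t" by (metis count_list_0_iff zero_neq_one)
  then obtain q r where t: "t = q @ x # r" "x \<notin> set q" by (metis split_list_first)
  have "count_list r x = 0" using \<open>count_list t x = 1\<close> t by (simp add: count_list_0_iff)
  then have xr: "x \<notin> set r" by (simp add: count_list_0_iff)
  have "is_nanoword (q @ r)"
    unfolding is_nanoword_def
  proof
    fix y assume y: "y \<in> set (q @ r)"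
    then have "y \<noteq> x" using t xr by auto
    moreover have "y \<in> set w" using y w t by auto
    then have "count_list w y = 2" using assms(1) unfolding is_nanoword_def by blast
    ultimately show "count_list (q @ r) y = 2"
      unfolding w t by simp
  qed
  then show ?thesis using w t xr by (intro exI[of _ x] exI[of _ q] exI[of _ r]) simp
qed

lemma realizable_decomp:
  assumes "realizable tau s" "s \<noteq> []"
  shows "\<exists>a s1 s2. s = a # s1 @ tau a # s2 \<and> realizable tau (s1 @ s2)"
proof -
  obtain lab w where w: "is_nanoword w" "s = gs tau lab {} w"
    using assms(1) unfolding realizable_def by blast
  then have "w \<noteq> []" using assms(2) by auto
  then obtain x q r where d: "w = x # q @ x # r" "x \<notin> set q" "x \<notin> set r" "is_nanoword (q @ r)"
    using nanoword_decomp w(1) by blast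
  have "s = lab x # gs tau lab {} q @ tau (lab x) # gs tau lab (set q) r"
    using d w(2) by (simp add: gs_append gs_drop)
  moreover have "realizable tau (gs tau lab {} q @ gs tau lab (set q) r)"
    unfolding realizable_def by (rule exI[of _ lab], rule exI[of _ "q @ r"]) (simp add: d(4) gs_append)
  ultimately show ?thesis by (intro exI conjI)
qed

lemma realizable_insert:
  assumes "realizable tau (p @ q @ r)"
  shows "realizable tau (p @ a # q @ tau a # r)"
proof -
  obtain lab w where w: "is_nanoword w" "p @ q @ r = gs tau lab {} w"
    using assms(1) unfolding realizable_def by blast
  define wp where "wp = take (length p) w"
  define wq where "wq = take (length q) (drop (length p) w)"
  define wr where "wr = drop (length q) (drop (length p) w)"
  have wsplit: "w = wp @ wq @ wr" unfolding wp_def wq_def wr_def by (metis append_take_drop_id)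
  have lens: "length wp = length p" "length wq = length q"
    using arg_cong[OF w(2), of length] unfolding wp_def wq_def by auto
  have eq: "p @ q @ r = gs tau lab {} wp @ gs tau lab (set wp) wq @ gs tau lab (set wp \<union> set wq) wr"
    using w(2) wsplit by (simp add: gs_append)
  then have ps: "p = gs tau lab {} wp" "q = gs tau lab (set wp) wq"
       "r = gs tau lab (set wp \<union> set wq) wr"
    using lens by (auto simp: append_eq_append_conv)
  obtain x :: nat where x: "x \<notin> set w"
    using ex_new_if_finite[OF infinite_UNIV_nat finite_set[of w]] by blast
  define w' where "w' = wp @ x # wq @ x # wr"
  define lab' where "lab' = lab(x := a)"
  have xs: "x \<notin> set wp" "x \<notin> set wq" "x \<notin> set wr" using x wsplit by auto
  have "is_nanoword w'"
    unfolding is_nanoword_def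
  proof
    fix y assume y: "y \<in> set w'"
    show "count_list w' y = 2"
    proof (cases "y = x")
      case True
      then show ?thesis using xs unfolding w'_def by (simp add: count_list_0_iff)
    next
      case False
      then have "y \<in> set w" using y wsplit unfolding w'_def by auto
      then have "count_list w y = 2" using w(1) unfolding is_nanoword_def by auto
      then show ?thesis using False wsplit unfolding w'_def by simp
    qed
  qed
  moreover have "gs tau lab' {} w' = p @ a # q @ tau a # r"
    unfolding w'_def lab'_def using xs ps
    by (simp add: gs_append gs_drop gs_lab)
  ultimately have "is_nanoword w' \<and> p @ a # q @ tau a # r = gs tau lab' {} w'" by simp
  then show ?thesis unfolding realizable_def by blast
qed


lemma realizable_Nil: "realizable tau []"
  unfolding realizable_def is_nanoword_def
  by (rule exI[of _ undefined], rule exI[of _ "[]"]) simp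

lemma realizable_len_induct:
  assumes "realizable tau s"
    and "P []"
    and "\<And>a s1 s2. realizable tau (s1 @ s2) \<Longrightarrow> P (s1 @ s2) \<Longrightarrow> P (a # s1 @ tau a # s2)"
  shows "P s"
  using assms(1)
proof (induction "length s" arbitrary: s rule: less_induct)
  case less
  show ?case
  proof (cases "s = []")
    case True then show ?thesis using assms(2) by simp
  next
    case False
    then obtain a s1 s2 where d: "s = a # s1 @ tau a # s2" "realizable tau (s1 @ s2)"
      using realizable_decomp less.prems by blast
    have "P (s1 @ s2)" using less.hyps[of "s1 @ s2"] d by simp
    then show ?thesis using assms(3) d by simp
  qed
qed

lemma realizable_app:
  assumes "realizable tau s" "realizable tau t" shows "realizable tau (s @ t)"
  using assms(2)
  by (rule realizable_len_induct)
     (auto simp: assms(1) intro: realizable_insert[of tau s _ _ , simplified])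

lemma realizable_bar:
  assumes inv: "\<forall>a. tau (tau a) = a" and "realizable tau t"
  shows "realizable tau (bar tau t)"
  using assms(2)
proof (rule realizable_len_induct)
  show "realizable tau (bar tau [])" by (simp add: bar_def realizable_Nil)
next
  fix a s1 s2 assume "realizable tau (bar tau (s1 @ s2))"
  then have "realizable tau (bar tau s2 @ bar tau s1 @ [])" by (simp add: bar_def)
  then have "realizable tau (bar tau s2 @ a # bar tau s1 @ tau a # [])"
    by (rule realizable_insert)
  then show "realizable tau (bar tau (a # s1 @ tau a # s2))"
    using inv by (simp add: bar_def)
qed

lemma realizable_vbar: "realizable tau (v @ bar tau v)"
proof (induction v)
  case Nil then show ?case by (simp add: bar_def realizable_Nil)
next
  case (Cons a v)
  have "realizable tau ([] @ a # (v @ bar tau v) @ tau a # [])"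
    by (rule realizable_insert) (simp add: Cons)
  then show ?case by (simp add: bar_def)
qed

lemma realizable_comm: "realizable tau (u @ v @ bar tau u @ bar tau v)"
proof (induction u)
  case Nil then show ?case by (simp add: bar_def realizable_vbar[unfolded bar_def])
next
  case (Cons a u)
  have "realizable tau ([] @ a # (u @ v @ bar tau u) @ tau a # bar tau v)"
    by (rule realizable_insert) (simp add: Cons)
  then show ?case by (simp add: bar_def)
qed


lemma bar_append: "bar tau (xs @ ys) = bar tau ys @ bar tau xs"
  by (simp add: bar_def)

lemma bar_single: "bar tau [a] = [tau a]"
  by (simp add: bar_def)

lemma bar_Cons: "bar tau (a # xs) = bar tau xs @ [tau a]"
  by (simp add: bar_def)

lemma cancel:
  assumes inv: "\<forall>a. tau (tau a) = a"
  shows "cls tau (X @ s @ bar tau s @ Y) = cls tau (X @ Y)"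
proof -
  have "(X @ (s @ bar tau s) @ Y, X @ [] @ Y) \<in> pi_eqv tau"
    by (rule pi_eqv_ctx[OF bar_cancel2[OF inv]])
  then show ?thesis by (simp add: cls_eq_iff)
qed

lemma lhs_eq: "{gamma tau lab w | lab w. is_nanoword w} = {cls tau s | s. realizable tau s}"
  unfolding gamma_def cls_def gamma_seq_gs realizable_def by blast

theorem lemma4p1:
  fixes tau :: "'a \<Rightarrow> 'a"
  assumes "\<forall>a. tau (tau a) = a"
  shows "{gamma tau lab w | lab w. is_nanoword w} = derived (Pi_grp tau) (carrier (Pi_grp tau))"
proof -
  note inv = assms
  interpret G: group "Pi_grp tau" by (rule group_Pi[OF inv])
  define N where "N = {cls tau s | s. realizable tau s}"
  define D where "D = derived (Pi_grp tau) (carrier (Pi_grp tau))"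
  have Dsub: "subgroup D (Pi_grp tau)"
    unfolding D_def by (rule G.derived_is_subgroup) simp
  have "N \<subseteq> D"
  proof
    fix x assume "x \<in> N"
    then obtain s where s: "x = cls tau s" "realizable tau s" unfolding N_def by blast
    have "cls tau s \<in> D"
      using s(2)
    proof (rule realizable_len_induct)
      show "cls tau [] \<in> D" using subgroup.one_closed[OF Dsub] by (simp add: one_cls)
    next
      fix a q r assume IH: "cls tau (q @ r) \<in> D"
      define h1 where "h1 = cls tau (bar tau r @ bar tau q @ r)"
      define h2 where "h2 = cls tau (bar tau r @ [a] @ r)"
      define c where "c = h1 \<otimes>\<^bsub>Pi_grp tau\<^esub> h2 \<otimes>\<^bsub>Pi_grp tau\<^esub> (inv\<^bsub>Pi_grp tau\<^esub> h1)
                  \<otimes>\<^bsub>Pi_grp tau\<^esub> (inv\<^bsub>Pi_grp tau\<^esub> h2)"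
      have "c \<in> derived_set (Pi_grp tau) (carrier (Pi_grp tau))"
        unfolding c_def h1_def h2_def carrier_Pi by blast
      then have cD: "c \<in> D" unfolding D_def derived_def by (rule generate.incl)
      have "cls tau (q @ r) \<otimes>\<^bsub>Pi_grp tau\<^esub> c = cls tau (q @ r @ bar tau r @ bar tau q @ r @ bar tau r @ a # r @ bar tau r @ q @ r @ bar tau r @ tau a # r)"
        unfolding c_def h1_def h2_def
        by (simp add: mult_cls inv_cls[OF inv] bar_append bar_bar[OF inv] bar_single bar_Cons)
      also have "\<dots> = cls tau (q @ bar tau q @ r @ bar tau r @ a # r @ bar tau r @ q @ r @ bar tau r @ tau a # r)"
        using cancel[OF inv, of q r "bar tau q @ r @ bar tau r @ a # r @ bar tau r @ q @ r @ bar tau r @ tau a # r"] by simp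
      also have "\<dots> = cls tau (r @ bar tau r @ a # r @ bar tau r @ q @ r @ bar tau r @ tau a # r)"
        using cancel[OF inv, of "[]" q "r @ bar tau r @ a # r @ bar tau r @ q @ r @ bar tau r @ tau a # r"] by simp
      also have "\<dots> = cls tau (a # r @ bar tau r @ q @ r @ bar tau r @ tau a # r)"
        using cancel[OF inv, of "[]" r "a # r @ bar tau r @ q @ r @ bar tau r @ tau a # r"] by simp
      also have "\<dots> = cls tau (a # q @ r @ bar tau r @ tau a # r)"
        using cancel[OF inv, of "[a]" r "q @ r @ bar tau r @ tau a # r"] by simp
      also have "\<dots> = cls tau (a # q @ tau a # r)"
        using cancel[OF inv, of "a # q" r "tau a # r"] by simp
      finally have eq: "cls tau (q @ r) \<otimes>\<^bsub>Pi_grp tau\<^esub> c = cls tau (a # q @ tau a # r)" .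
      show "cls tau (a # q @ tau a # r) \<in> D"
        using subgroup.m_closed[OF Dsub IH cD] eq by simp
    qed
    then show "x \<in> D" using s by simp
  qed
  moreover have "D \<subseteq> N"
  proof -
    have subN: "subgroup N (Pi_grp tau)"
    proof (rule G.subgroupI)
      show "N \<subseteq> carrier (Pi_grp tau)" unfolding N_def carrier_Pi by blast
      show "N \<noteq> {}" unfolding N_def using realizable_Nil by blast
    next
      fix x assume "x \<in> N"
      then obtain s where s: "x = cls tau s" "realizable tau s" unfolding N_def by blast
      show "inv\<^bsub>Pi_grp tau\<^esub> x \<in> N"
        unfolding N_def using s inv_cls[OF inv] realizable_bar[OF inv s(2)] by blast
    next
      fix x y assume "x \<in> N" "y \<in> N"
      then obtain s t where "x = cls tau s" "realizable tau s" "y = cls tau t" "realizable tau t"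
        unfolding N_def by blast
      then show "x \<otimes>\<^bsub>Pi_grp tau\<^esub> y \<in> N"
        unfolding N_def using mult_cls realizable_app by blast
    qed
    have "derived_set (Pi_grp tau) (carrier (Pi_grp tau)) \<subseteq> N"
    proof
      fix x assume "x \<in> derived_set (Pi_grp tau) (carrier (Pi_grp tau))"
      then obtain u v where x: "x = cls tau u \<otimes>\<^bsub>Pi_grp tau\<^esub> cls tau v \<otimes>\<^bsub>Pi_grp tau\<^esub>
          (inv\<^bsub>Pi_grp tau\<^esub> cls tau u) \<otimes>\<^bsub>Pi_grp tau\<^esub> (inv\<^bsub>Pi_grp tau\<^esub> cls tau v)"
        unfolding carrier_Pi by blast
      have "x = cls tau (u @ v @ bar tau u @ bar tau v)"
        unfolding x by (simp add: mult_cls inv_cls[OF inv])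
      then show "x \<in> N" unfolding N_def using realizable_comm by blast
    qed
    then show ?thesis unfolding D_def derived_def by (rule G.generate_subgroup_incl[OF _ subN])
  qed
  ultimately show ?thesis unfolding lhs_eq N_def D_def by blast
qed

end
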